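(* Let $\gamma$ be a positive integer and let $$G=\Bigl\langle a,b\,\Bigm|\, a^{2^{\gamma+1}}=b^{2^{\gamma+1}}=[a,b]^{2^{\gamma}}=[a,b,a]=[a,b,b]=e,\ a^{2^{\gamma}}=b^{2^{\gamma}}=[a,b]^{2^{\gamma-1}}\Bigr\rangle.$$ Then $G$ is not capable.
   Context: A group $G$ is called capable if there exists a group $K$ such that $K/Z(K)\cong G$. Commutators are $[x,y]=x^{-1}y^{-1}xy$, left-normed: $[x,y,z]=[[x,y],z]$. *)

theory Defs
  imports "HOL-Algebra.Algebra"
begin

definition center :: "('a, 'b) monoid_scheme \<Rightarrow> 'a set" where
  "center G = {z \<in> carrier G. \<forall>x\<in>carrier G. z \<otimes>\<^bsub>G\<^esub> x = x \<otimes>\<^bsub>G\<^esub> z}"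

definition commutator :: "('a, 'b) monoid_scheme \<Rightarrow> 'a \<Rightarrow> 'a \<Rightarrow> 'a" where
  "commutator G x y = inv\<^bsub>G\<^esub> x \<otimes>\<^bsub>G\<^esub> inv\<^bsub>G\<^esub> y \<otimes>\<^bsub>G\<^esub> x \<otimes>\<^bsub>G\<^esub> y"

(* G is capable iff G = K/Z(K) for some group K (K's element type is a parameter;
   the theorem quantifies over it universally) *)
definition capable_via :: "('k, 'c) monoid_scheme \<Rightarrow> ('a, 'b) monoid_scheme \<Rightarrow> bool" where
  "capable_via K G \<longleftrightarrow> group K \<and> (K Mod center K) \<cong> G"

definition rels :: "nat \<Rightarrow> ('a, 'b) monoid_scheme \<Rightarrow> 'a \<Rightarrow> 'a \<Rightarrow> bool" where
  "rels \<gamma> H x y \<longleftrightarrow>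
     x [^]\<^bsub>H\<^esub> ((2::nat) ^ (\<gamma> + 1)) = \<one>\<^bsub>H\<^esub> \<and>
     y [^]\<^bsub>H\<^esub> ((2::nat) ^ (\<gamma> + 1)) = \<one>\<^bsub>H\<^esub> \<and>
     commutator H x y [^]\<^bsub>H\<^esub> ((2::nat) ^ \<gamma>) = \<one>\<^bsub>H\<^esub> \<and>
     commutator H (commutator H x y) x = \<one>\<^bsub>H\<^esub> \<and>
     commutator H (commutator H x y) y = \<one>\<^bsub>H\<^esub> \<and>
     x [^]\<^bsub>H\<^esub> ((2::nat) ^ \<gamma>) = y [^]\<^bsub>H\<^esub> ((2::nat) ^ \<gamma>) \<and>
     y [^]\<^bsub>H\<^esub> ((2::nat) ^ \<gamma>) = commutator H x y [^]\<^bsub>H\<^esub> ((2::nat) ^ (\<gamma> - 1))"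

(* G with distinguished elements a, b is (isomorphic to) the group presented by
   <a,b | rels>: G is a group generated by a,b satisfying the relations, and it has
   the universal property with respect to every group satisfying the relations.
   Since the presented group is countable (2-generated), testing the universal property
   on groups whose elements are natural numbers already characterises it up to
   isomorphism. *)
definition presented_by_rels :: "nat \<Rightarrow> ('a, 'b) monoid_scheme \<Rightarrow> 'a \<Rightarrow> 'a \<Rightarrow> bool" where
  "presented_by_rels \<gamma> G a b \<longleftrightarrow>
     group G \<and> a \<in> carrier G \<and> b \<in> carrier G \<and>
     generate G {a, b} = carrier G \<and> rels \<gamma> G a b \<and>
     (\<forall>(H :: nat monoid) x y. group H \<and> x \<in> carrier H \<and> y \<in> carrier H \<and> rels \<gamma> H x y
        \<longrightarrow> (\<exists>h \<in> hom G H. h a = x \<and> h b = y))"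

end

theory Submission
  imports Defs "HOL-Library.Countable_Set"
begin


lemma (in group) comm_inv:
  assumes u: "u \<in> carrier G" and a: "a \<in> carrier G" and e: "u \<otimes> a = a \<otimes> u"
  shows "u \<otimes> inv a = inv a \<otimes> u"
proof -
  have "u \<otimes> inv a = inv a \<otimes> (a \<otimes> u) \<otimes> inv a"
    using u a by (simp add: m_assoc[symmetric])
  also have "\<dots> = inv a \<otimes> (u \<otimes> a) \<otimes> inv a" using e by simp
  also have "\<dots> = inv a \<otimes> u" using u a by (simp add: m_assoc)
  finally show ?thesis .
qed

lemma (in group) comm_mult:
  assumes u: "u \<in> carrier G" and a: "a \<in> carrier G" and b: "b \<in> carrier G"
    and e: "u \<otimes> a = a \<otimes> u" and f: "u \<otimes> b = b \<otimes> u"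
  shows "u \<otimes> (a \<otimes> b) = a \<otimes> b \<otimes> u"
proof -
  have "u \<otimes> (a \<otimes> b) = (u \<otimes> a) \<otimes> b" using u a b by (simp add: m_assoc)
  also have "\<dots> = a \<otimes> (u \<otimes> b)" using e u a b by (simp add: m_assoc)
  also have "\<dots> = a \<otimes> b \<otimes> u" using f u a b by (simp add: m_assoc)
  finally show ?thesis .
qed

lemma (in group) centralizer_subgroup:
  assumes u: "u \<in> carrier G"
  shows "subgroup {k \<in> carrier G. u \<otimes> k = k \<otimes> u} G"
proof (rule subgroupI)
  show "{k \<in> carrier G. u \<otimes> k = k \<otimes> u} \<noteq> {}" using u by auto
next
  fix a assume a: "a \<in> {k \<in> carrier G. u \<otimes> k = k \<otimes> u}"
  then have ac: "a \<in> carrier G" and e: "u \<otimes> a = a \<otimes> u" by auto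
  have "u \<otimes> inv a = inv a \<otimes> u" using comm_inv[OF u ac e] .
  then show "inv a \<in> {k \<in> carrier G. u \<otimes> k = k \<otimes> u}" using ac by auto
next
  fix a b assume a: "a \<in> {k \<in> carrier G. u \<otimes> k = k \<otimes> u}" and b: "b \<in> {k \<in> carrier G. u \<otimes> k = k \<otimes> u}"
  then have "u \<otimes> (a \<otimes> b) = a \<otimes> b \<otimes> u" using u
    by (intro comm_mult) auto
  then show "a \<otimes> b \<in> {k \<in> carrier G. u \<otimes> k = k \<otimes> u}" using a b by auto
qed auto

lemma (in group) center_normal: "center G \<lhd> G"
proof -
  have sub: "subgroup (center G) G"
  proof (rule subgroupI)
    show "center G \<subseteq> carrier G" unfolding center_def by blast
    have "\<one> \<in> center G" unfolding center_def by simp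
    then show "center G \<noteq> {}" by blast
  next
    fix a assume A: "a \<in> center G"
    then have ac: "a \<in> carrier G" and e: "\<And>x. x \<in> carrier G \<Longrightarrow> a \<otimes> x = x \<otimes> a"
      unfolding center_def by blast+
    have "\<forall>x\<in>carrier G. inv a \<otimes> x = x \<otimes> inv a"
    proof
      fix x assume x: "x \<in> carrier G"
      show "inv a \<otimes> x = x \<otimes> inv a" using comm_inv[OF x ac e[OF x, symmetric]] by simp
    qed
    then show "inv a \<in> center G" using ac unfolding center_def by simp
  next
    fix a b assume A: "a \<in> center G" and B: "b \<in> center G"
    then have ac: "a \<in> carrier G" and ea: "\<And>x. x \<in> carrier G \<Longrightarrow> a \<otimes> x = x \<otimes> a"
      and bc: "b \<in> carrier G" and eb: "\<And>x. x \<in> carrier G \<Longrightarrow> b \<otimes> x = x \<otimes> b"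
      unfolding center_def by blast+
    have "\<forall>x\<in>carrier G. a \<otimes> b \<otimes> x = x \<otimes> (a \<otimes> b)"
    proof
      fix x assume x: "x \<in> carrier G"
      show "a \<otimes> b \<otimes> x = x \<otimes> (a \<otimes> b)"
        using comm_mult[OF x ac bc ea[OF x, symmetric] eb[OF x, symmetric]] by simp
    qed
    then show "a \<otimes> b \<in> center G" using ac bc unfolding center_def by simp
  qed
  show ?thesis unfolding normal_inv_iff
  proof (intro conjI sub ballI)
    fix x h assume x: "x \<in> carrier G" and h: "h \<in> center G"
    then have hc: "h \<in> carrier G" and e: "h \<otimes> x = x \<otimes> h" unfolding center_def by blast+
    have "x \<otimes> h \<otimes> inv x = h \<otimes> x \<otimes> inv x" using e by simp
    also have "\<dots> = h" using x hc by (simp add: m_assoc)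
    finally show "x \<otimes> h \<otimes> inv x \<in> center G" using h by simp
  qed
qed

lemma epicenter_lemma:
  fixes K :: "('k, 'c) monoid_scheme" and G :: "('a, 'b) monoid_scheme"
  assumes K: "group K" and G: "group G" and phi: "\<phi> \<in> iso (K Mod center K) G"
    and gen: "generate G {a, b} = carrier G" and a: "a \<in> carrier G" and b: "b \<in> carrier G"
    and ab: "a [^]\<^bsub>G\<^esub> (m::nat) = b [^]\<^bsub>G\<^esub> m"
  shows "a [^]\<^bsub>G\<^esub> m = \<one>\<^bsub>G\<^esub>"
proof -
  interpret K: group K by (rule K)
  interpret G: group G by (rule G)
  define Z where "Z = center K"
  interpret Zn: normal Z K unfolding Z_def by (rule K.center_normal)
  have Zsub: "Z \<subseteq> carrier K" unfolding Z_def center_def by blast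
  have Zc: "\<And>z k. z \<in> Z \<Longrightarrow> k \<in> carrier K \<Longrightarrow> z \<otimes>\<^bsub>K\<^esub> k = k \<otimes>\<^bsub>K\<^esub> z"
    unfolding Z_def center_def by blast
  have Qg: "group (K Mod Z)" by (rule Zn.factorgroup_is_group)
  have pihom: "(\<lambda>k. Z #>\<^bsub>K\<^esub> k) \<in> hom K (K Mod Z)" by (rule Zn.r_coset_hom_Mod)
  have phihom: "\<phi> \<in> hom (K Mod Z) G" and phibij: "bij_betw \<phi> (carrier (K Mod Z)) (carrier G)"
    using phi by (auto simp: iso_def Z_def)
  define \<psi> where "\<psi> = (\<lambda>k. \<phi> (Z #>\<^bsub>K\<^esub> k))"
  have psihom: "\<psi> \<in> hom K G"
    using pihom phihom unfolding hom_def \<psi>_def by (auto simp: Pi_def)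
  interpret h: group_hom K G \<psi> using psihom K G by (simp add: group_hom_def group_hom_axioms_def)
  have carQ: "carrier (K Mod Z) = (\<lambda>k. Z #>\<^bsub>K\<^esub> k) ` carrier K" by (rule carrier_FactGroup)
  have surj: "\<psi> ` carrier K = carrier G"
    using phibij carQ unfolding bij_betw_def \<psi>_def by (auto simp: image_image[symmetric])
  have phione: "\<phi> Z = \<one>\<^bsub>G\<^esub>"
    using group_hom.hom_one[of "K Mod Z" G \<phi>] Qg G phihom
    by (simp add: group_hom_def group_hom_axioms_def)
  have ker: "k \<in> Z" if k: "k \<in> carrier K" and e: "\<psi> k = \<one>\<^bsub>G\<^esub>" for k
  proof -
    have "Z \<in> carrier (K Mod Z)" using Qg by (metis monoid.one_closed group.is_monoid one_FactGroup)
    moreover have "Z #>\<^bsub>K\<^esub> k \<in> carrier (K Mod Z)" using carQ k by auto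
    moreover have "\<phi> (Z #>\<^bsub>K\<^esub> k) = \<phi> Z" using e phione by (simp add: \<psi>_def)
    ultimately have "Z #>\<^bsub>K\<^esub> k = Z" using phibij unfolding bij_betw_def inj_on_def by blast
    then show ?thesis using K.rcos_self[OF k Zn.subgroup_axioms] by simp
  qed
  obtain x where x: "x \<in> carrier K" "\<psi> x = a" using a unfolding surj[symmetric] by blast
  obtain y where y: "y \<in> carrier K" "\<psi> y = b" using b unfolding surj[symmetric] by blast
  define u where "u = x [^]\<^bsub>K\<^esub> m"
  define v where "v = y [^]\<^bsub>K\<^esub> m"
  have uc: "u \<in> carrier K" and vc: "v \<in> carrier K" using x y by (auto simp: u_def v_def)
  have "\<psi> u = \<psi> v" using x y ab by (simp add: u_def v_def h.hom_nat_pow)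
  then have "\<psi> (u \<otimes>\<^bsub>K\<^esub> inv\<^bsub>K\<^esub> v) = \<one>\<^bsub>G\<^esub>" using uc vc by simp
  then have zZ: "u \<otimes>\<^bsub>K\<^esub> inv\<^bsub>K\<^esub> v \<in> Z" using uc vc by (intro ker) auto
  define z where "z = u \<otimes>\<^bsub>K\<^esub> inv\<^bsub>K\<^esub> v"
  have zc: "z \<in> carrier K" using uc vc by (simp add: z_def)
  have uzv: "u = z \<otimes>\<^bsub>K\<^esub> v" using uc vc by (simp add: z_def K.m_assoc)
  have vy: "v \<otimes>\<^bsub>K\<^esub> y = y \<otimes>\<^bsub>K\<^esub> v"
    using y(1) K.nat_pow_comm[of y m 1] by (simp add: v_def)
  have uy: "u \<otimes>\<^bsub>K\<^esub> y = y \<otimes>\<^bsub>K\<^esub> u"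
  proof -
    have "u \<otimes>\<^bsub>K\<^esub> y = z \<otimes>\<^bsub>K\<^esub> (v \<otimes>\<^bsub>K\<^esub> y)" using uzv zc vc y by (simp add: K.m_assoc)
    also have "\<dots> = (z \<otimes>\<^bsub>K\<^esub> y) \<otimes>\<^bsub>K\<^esub> v" using vy zc vc y by (simp add: K.m_assoc)
    also have "\<dots> = (y \<otimes>\<^bsub>K\<^esub> z) \<otimes>\<^bsub>K\<^esub> v" using Zc[OF zZ[folded z_def] y(1)] by simp
    also have "\<dots> = y \<otimes>\<^bsub>K\<^esub> u" using uzv zc vc y by (simp add: K.m_assoc)
    finally show ?thesis .
  qed
  have ux: "u \<otimes>\<^bsub>K\<^esub> x = x \<otimes>\<^bsub>K\<^esub> u"
    using x(1) K.nat_pow_comm[of x m 1] by (simp add: u_def)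
  define C where "C = {k \<in> carrier K. u \<otimes>\<^bsub>K\<^esub> k = k \<otimes>\<^bsub>K\<^esub> u}"
  have Csub: "subgroup C K" unfolding C_def by (rule K.centralizer_subgroup[OF uc])
  have "subgroup (\<psi> ` C) G" by (rule h.subgroup_img_is_subgroup[OF Csub])
  moreover have "{a, b} \<subseteq> \<psi> ` C" using x y ux uy by (auto simp: C_def)
  ultimately have allC: "carrier G \<subseteq> \<psi> ` C" using G.generate_subgroup_incl gen by metis
  have uZ: "u \<in> Z"
    unfolding Z_def center_def
  proof (intro CollectI conjI uc ballI)
    fix k assume k: "k \<in> carrier K"
    then have "\<psi> k \<in> \<psi> ` C" using allC by auto
    then obtain s where s: "s \<in> C" "\<psi> k = \<psi> s" by auto
    have sc: "s \<in> carrier K" using s by (simp add: C_def)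
    have "\<psi> (k \<otimes>\<^bsub>K\<^esub> inv\<^bsub>K\<^esub> s) = \<one>\<^bsub>G\<^esub>" using s sc k by simp
    then have wZ: "k \<otimes>\<^bsub>K\<^esub> inv\<^bsub>K\<^esub> s \<in> Z" using sc k by (intro ker) auto
    define w where "w = k \<otimes>\<^bsub>K\<^esub> inv\<^bsub>K\<^esub> s"
    have wc: "w \<in> carrier K" using sc k by (simp add: w_def)
    have kw: "k = w \<otimes>\<^bsub>K\<^esub> s" using sc k by (simp add: w_def K.m_assoc)
    have us: "u \<otimes>\<^bsub>K\<^esub> s = s \<otimes>\<^bsub>K\<^esub> u" using s by (simp add: C_def)
    have "u \<otimes>\<^bsub>K\<^esub> k = (u \<otimes>\<^bsub>K\<^esub> w) \<otimes>\<^bsub>K\<^esub> s" using kw uc wc sc by (simp add: K.m_assoc)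
    also have "\<dots> = (w \<otimes>\<^bsub>K\<^esub> u) \<otimes>\<^bsub>K\<^esub> s" using Zc[OF wZ[folded w_def] uc] by simp
    also have "\<dots> = w \<otimes>\<^bsub>K\<^esub> (s \<otimes>\<^bsub>K\<^esub> u)" using us uc wc sc by (simp add: K.m_assoc)
    also have "\<dots> = k \<otimes>\<^bsub>K\<^esub> u" using kw uc wc sc by (simp add: K.m_assoc)
    finally show "u \<otimes>\<^bsub>K\<^esub> k = k \<otimes>\<^bsub>K\<^esub> u" .
  qed
  have "Z #>\<^bsub>K\<^esub> u = Z" using Zn.rcos_const[OF K uZ] .
  then have "\<psi> u = \<one>\<^bsub>G\<^esub>" using phione by (simp add: \<psi>_def)
  then show ?thesis using x by (simp add: u_def h.hom_nat_pow)
qed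



lemma commutator_hom:
  assumes hg: "group_hom G H h" and x: "x \<in> carrier G" and y: "y \<in> carrier G"
  shows "h (commutator G x y) = commutator H (h x) (h y)"
proof -
  have G: "group G" and H: "group H" and hh: "h \<in> hom G H" using hg by (auto simp: group_hom_def group_hom_axioms_def)
  have c: "inv\<^bsub>G\<^esub> x \<in> carrier G" "inv\<^bsub>G\<^esub> y \<in> carrier G" using x y G by (auto intro: group.inv_closed)
  have c2: "inv\<^bsub>G\<^esub> x \<otimes>\<^bsub>G\<^esub> inv\<^bsub>G\<^esub> y \<in> carrier G" using c G by (auto intro: monoid.m_closed group.is_monoid)
  have c3: "inv\<^bsub>G\<^esub> x \<otimes>\<^bsub>G\<^esub> inv\<^bsub>G\<^esub> y \<otimes>\<^bsub>G\<^esub> x \<in> carrier G" using c2 x G by (auto intro: monoid.m_closed group.is_monoid)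
  have m: "\<And>a b. a \<in> carrier G \<Longrightarrow> b \<in> carrier G \<Longrightarrow> h (a \<otimes>\<^bsub>G\<^esub> b) = h a \<otimes>\<^bsub>H\<^esub> h b"
    using hh by (simp add: hom_def)
  have i: "\<And>a. a \<in> carrier G \<Longrightarrow> h (inv\<^bsub>G\<^esub> a) = inv\<^bsub>H\<^esub> (h a)"
    using group_hom.hom_inv[OF hg] by blast
  have "h (inv\<^bsub>G\<^esub> x \<otimes>\<^bsub>G\<^esub> inv\<^bsub>G\<^esub> y \<otimes>\<^bsub>G\<^esub> x \<otimes>\<^bsub>G\<^esub> y)
      = h (inv\<^bsub>G\<^esub> x) \<otimes>\<^bsub>H\<^esub> h (inv\<^bsub>G\<^esub> y) \<otimes>\<^bsub>H\<^esub> h x \<otimes>\<^bsub>H\<^esub> h y"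
    using m c c2 c3 x y by metis
  also have "\<dots> = inv\<^bsub>H\<^esub> (h x) \<otimes>\<^bsub>H\<^esub> inv\<^bsub>H\<^esub> (h y) \<otimes>\<^bsub>H\<^esub> h x \<otimes>\<^bsub>H\<^esub> h y"
    using x y i by metis
  finally show ?thesis unfolding commutator_def .
qed


lemma commutator_closed:
  assumes "group G" "x \<in> carrier G" "y \<in> carrier G"
  shows "commutator G x y \<in> carrier G"
proof -
  interpret group G by (rule assms(1))
  show ?thesis using assms(2,3) unfolding commutator_def by (intro m_closed inv_closed)
qed


lemma rels_hom:
  assumes hg: "group_hom G H h" and x: "x \<in> carrier G" and y: "y \<in> carrier G"
    and r: "rels \<gamma> G x y"
  shows "rels \<gamma> H (h x) (h y)"
proof -
  have G: "group G" and H: "group H" and hh: "h \<in> hom G H" using hg unfolding group_hom_def group_hom_axioms_def by blast+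
  have cc: "commutator G x y \<in> carrier G" by (rule commutator_closed[OF G x y])
  have ch: "h (commutator G x y) = commutator H (h x) (h y)" using commutator_hom[OF hg x y] .
  have ch2: "h (commutator G (commutator G x y) x) = commutator H (commutator H (h x) (h y)) (h x)"
    using commutator_hom[OF hg cc x] ch by simp
  have ch3: "h (commutator G (commutator G x y) y) = commutator H (commutator H (h x) (h y)) (h y)"
    using commutator_hom[OF hg cc y] ch by simp
  have pw: "\<And>a (N::nat). a \<in> carrier G \<Longrightarrow> h (a [^]\<^bsub>G\<^esub> N) = h a [^]\<^bsub>H\<^esub> N"
    by (rule hom_nat_pow[OF hh _ G H])
  have h1: "h \<one>\<^bsub>G\<^esub> = \<one>\<^bsub>H\<^esub>" using group_hom.hom_one[OF hg] .
  note rr = r[unfolded rels_def]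
  note r1 = rr[THEN conjunct1]
  note r2 = rr[THEN conjunct2, THEN conjunct1]
  note r3 = rr[THEN conjunct2, THEN conjunct2, THEN conjunct1]
  note r4 = rr[THEN conjunct2, THEN conjunct2, THEN conjunct2, THEN conjunct1]
  note r5 = rr[THEN conjunct2, THEN conjunct2, THEN conjunct2, THEN conjunct2, THEN conjunct1]
  note r6 = rr[THEN conjunct2, THEN conjunct2, THEN conjunct2, THEN conjunct2, THEN conjunct2, THEN conjunct1]
  note r7 = rr[THEN conjunct2, THEN conjunct2, THEN conjunct2, THEN conjunct2, THEN conjunct2, THEN conjunct2]
  show ?thesis unfolding rels_def
  proof (intro conjI)
    show "h x [^]\<^bsub>H\<^esub> ((2::nat) ^ (\<gamma> + 1)) = \<one>\<^bsub>H\<^esub>" using r1 pw[OF x] h1 by metis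
    show "h y [^]\<^bsub>H\<^esub> ((2::nat) ^ (\<gamma> + 1)) = \<one>\<^bsub>H\<^esub>" using r2 pw[OF y] h1 by metis
    show "commutator H (h x) (h y) [^]\<^bsub>H\<^esub> ((2::nat) ^ \<gamma>) = \<one>\<^bsub>H\<^esub>" using r3 pw[OF cc] h1 ch by metis
    show "commutator H (commutator H (h x) (h y)) (h x) = \<one>\<^bsub>H\<^esub>" using r4 ch2 h1 by metis
    show "commutator H (commutator H (h x) (h y)) (h y) = \<one>\<^bsub>H\<^esub>" using r5 ch3 h1 by metis
    show "h x [^]\<^bsub>H\<^esub> ((2::nat) ^ \<gamma>) = h y [^]\<^bsub>H\<^esub> ((2::nat) ^ \<gamma>)" using r6 pw[OF x] pw[OF y] by metis
    show "h y [^]\<^bsub>H\<^esub> ((2::nat) ^ \<gamma>) = commutator H (h x) (h y) [^]\<^bsub>H\<^esub> ((2::nat) ^ (\<gamma> - 1))"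
      using r7 pw[OF y] pw[OF cc] ch by metis
  qed
qed


definition heis :: "(int \<times> int \<times> int) monoid" where
  "heis = \<lparr>carrier = UNIV, monoid.mult = (\<lambda>(i,j,k) (i',j',k'). (i+i', j+j', k+k'+j*i')), one = (0,0,0)\<rparr>"

lemma heis_mult [simp]: "(i,j,k) \<otimes>\<^bsub>heis\<^esub> (i',j',k') = (i+i', j+j', k+k'+j*i')"
  by (simp add: heis_def)
lemma heis_one [simp]: "\<one>\<^bsub>heis\<^esub> = (0,0,0)" by (simp add: heis_def)
lemma heis_carrier [simp]: "carrier heis = UNIV" by (simp add: heis_def)

lemma heis_group: "group heis"
proof (rule groupI)
  fix x y z :: "int \<times> int \<times> int"
  show "x \<otimes>\<^bsub>heis\<^esub> y \<otimes>\<^bsub>heis\<^esub> z = x \<otimes>\<^bsub>heis\<^esub> (y \<otimes>\<^bsub>heis\<^esub> z)"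
    by (cases x; cases y; cases z) (simp add: algebra_simps)
next
  fix x :: "int \<times> int \<times> int"
  show "\<one>\<^bsub>heis\<^esub> \<otimes>\<^bsub>heis\<^esub> x = x" by (cases x) simp
  obtain i j k where "x = (i,j,k)" by (cases x)
  then show "\<exists>y\<in>carrier heis. y \<otimes>\<^bsub>heis\<^esub> x = \<one>\<^bsub>heis\<^esub>"
    by (intro bexI[of _ "(-i,-j,i*j-k)"]) (auto simp: algebra_simps)
qed auto

lemma heis_inv [simp]: "inv\<^bsub>heis\<^esub> (i,j,k) = (-i,-j,i*j-k)"
  by (rule group.inv_equality[OF heis_group]) (auto simp: algebra_simps)

definition NN :: "int \<Rightarrow> (int \<times> int \<times> int) set" where
  "NN n = {(i,j,k). n dvd i \<and> n dvd j \<and> 2*n dvd 2*k - i - j}"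

lemma dvd2: "(n::int) dvd a \<Longrightarrow> 2*n dvd 2*(a*b)"
  by (simp add: mult_dvd_mono)

lemma NN_normal: "NN n \<lhd> heis"
proof -
  interpret H: group heis by (rule heis_group)
  have sub: "subgroup (NN n) heis"
  proof (rule H.subgroupI)
    have "(0,0,0) \<in> NN n" by (simp add: NN_def)
    then show "NN n \<noteq> {}" by blast
  next
    fix a assume "a \<in> NN n"
    then obtain i j k where a: "a = (i,j,k)" and d: "n dvd i" "n dvd j" "2*n dvd 2*k - i - j"
      by (auto simp: NN_def)
    have e: "2*(i*j-k) - (-i) - (-j) = 2*(i*j) - (2*k - i - j)" by (simp add: algebra_simps)
    show "inv\<^bsub>heis\<^esub> a \<in> NN n" using d dvd2[OF d(1), of j] unfolding a NN_def
      by (simp only: heis_inv mem_Collect_eq split e) (simp add: dvd_diff)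
  next
    fix a b assume "a \<in> NN n" "b \<in> NN n"
    then obtain i j k i' j' k' where a: "a = (i,j,k)" and d: "n dvd i" "n dvd j" "2*n dvd 2*k - i - j"
      and b: "b = (i',j',k')" and d': "n dvd i'" "n dvd j'" "2*n dvd 2*k' - i' - j'"
      by (auto simp: NN_def)
    have e: "2*(k+k'+j*i') - (i+i') - (j+j') = (2*k-i-j) + (2*k'-i'-j') + 2*(j*i')" by (simp add: algebra_simps)
    show "a \<otimes>\<^bsub>heis\<^esub> b \<in> NN n" using d d' dvd2[OF d(2), of i'] unfolding a b NN_def
      by (simp only: heis_mult mem_Collect_eq split e) (simp add: dvd_add)
  qed (auto simp: NN_def)
  show ?thesis unfolding H.normal_inv_iff
  proof (intro conjI sub ballI)
    fix x :: "int \<times> int \<times> int" and h assume h: "h \<in> NN n"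
    then obtain i j k where hh: "h = (i,j,k)" and d: "n dvd i" "n dvd j" "2*n dvd 2*k - i - j"
      by (auto simp: NN_def)
    obtain p q r :: int where x: "x = (p,q,r)" by (cases x)
    have e: "2*(r + k + q*i + (p*q - r) + (q+j)*(-p)) - (p+i+-p) - (q+j+-q)
       = (2*k-i-j) + 2*(i*q) - 2*(j*p)" by (simp add: algebra_simps)
    show "x \<otimes>\<^bsub>heis\<^esub> h \<otimes>\<^bsub>heis\<^esub> inv\<^bsub>heis\<^esub> x \<in> NN n"
      using d dvd2[OF d(1), of q] dvd2[OF d(2), of p] unfolding x hh NN_def
      by (simp only: heis_mult heis_inv mem_Collect_eq split e) (simp add: dvd_add dvd_diff)
  qed
qed



lemma pi_eq:
  "(r_coset heis (NN n) u = r_coset heis (NN n) v) \<longleftrightarrow> u \<otimes>\<^bsub>heis\<^esub> inv\<^bsub>heis\<^esub> v \<in> NN n"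
proof -
  interpret N: normal "NN n" heis by (rule NN_normal)
  have sg: "subgroup (NN n) heis" by (rule N.subgroup_axioms)
  show ?thesis
  proof
    assume e: "r_coset heis (NN n) u = r_coset heis (NN n) v"
    have "u \<in> r_coset heis (NN n) u" using group.rcos_self[OF heis_group _ sg, of u] by simp
    then have "u \<in> r_coset heis (NN n) v" using e by simp
    then show "u \<otimes>\<^bsub>heis\<^esub> inv\<^bsub>heis\<^esub> v \<in> NN n"
      using N.rcos_module_imp[OF heis_group, of v u] by simp
  next
    assume "u \<otimes>\<^bsub>heis\<^esub> inv\<^bsub>heis\<^esub> v \<in> NN n"
    then have "u \<in> r_coset heis (NN n) v" using N.rcos_module_rev[OF heis_group, of v u] by simp
    then have "r_coset heis (NN n) v = r_coset heis (NN n) u"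
      using group.repr_independence[OF heis_group _ _ sg, of u v] by simp
    then show "r_coset heis (NN n) u = r_coset heis (NN n) v" by simp
  qed
qed

lemma powX: "(1,0,0) [^]\<^bsub>heis\<^esub> (k::nat) = (int k, 0, 0)"
proof -
  interpret H: group heis by (rule heis_group)
  show ?thesis by (induction k) simp_all
qed

lemma powY: "(0,1,0) [^]\<^bsub>heis\<^esub> (k::nat) = (0, int k, 0)"
proof -
  interpret H: group heis by (rule heis_group)
  show ?thesis by (induction k) simp_all
qed

lemma powC: "(0,0,-1) [^]\<^bsub>heis\<^esub> (k::nat) = (0, 0, - int k)"
proof -
  interpret H: group heis by (rule heis_group)
  show ?thesis by (induction k) simp_all
qed

lemma commXY: "commutator heis (1,0,0) (0,1,0) = (0,0,-1)"
  by (simp add: commutator_def)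
lemma commCX: "commutator heis (0,0,-1) (1,0,0) = (0,0,0)"
  by (simp add: commutator_def)
lemma commCY: "commutator heis (0,0,-1) (0,1,0) = (0,0,0)"
  by (simp add: commutator_def)



lemma nat_copy:
  assumes Q: "group Q" and c: "countable (carrier Q)"
  shows "\<exists>(H::nat monoid) f. group H \<and> f \<in> iso Q H"
proof -
  define f where "f = to_nat_on (carrier Q)"
  define g where "g = inv_into (carrier Q) f"
  have inj: "inj_on f (carrier Q)" using c unfolding f_def by (rule inj_on_to_nat_on)
  have gf: "\<And>x. x \<in> carrier Q \<Longrightarrow> g (f x) = x" using inj by (simp add: g_def)
  define H where "H = \<lparr>carrier = f ` carrier Q, monoid.mult = (\<lambda>u v. f (g u \<otimes>\<^bsub>Q\<^esub> g v)), one = f \<one>\<^bsub>Q\<^esub>\<rparr>"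
  have hom: "f \<in> hom Q H"
    unfolding hom_def H_def using gf monoid.m_closed[OF group.is_monoid[OF Q]] by (simp add: Pi_def)
  have bij: "bij_betw f (carrier Q) (carrier H)" using inj by (simp add: bij_betw_def H_def)
  have iso: "f \<in> iso Q H" by (simp add: iso_def hom bij)
  have "monoid (H\<lparr>carrier := f ` carrier Q, one := f \<one>\<^bsub>Q\<^esub>\<rparr>)"
    by (rule monoid.hom_imp_img_monoid[OF group.is_monoid[OF Q] hom])
  moreover have "H\<lparr>carrier := f ` carrier Q, one := f \<one>\<^bsub>Q\<^esub>\<rparr> = H" by (simp add: H_def)
  ultimately have mon: "monoid H" by simp
  have "group H" by (rule group.iso_imp_group[OF Q is_isoI[OF iso] mon])
  then show ?thesis using iso by blast
qed

lemma model_Q: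
  assumes g1: "\<gamma> \<ge> 1"
  defines "Q \<equiv> heis Mod NN (2 ^ \<gamma>)"
  defines "\<pi> \<equiv> r_coset heis (NN (2 ^ \<gamma>))"
  shows "group Q" "countable (carrier Q)" "\<pi> (1,0,0) \<in> carrier Q" "\<pi> (0,1,0) \<in> carrier Q"
    "rels \<gamma> Q (\<pi> (1,0,0)) (\<pi> (0,1,0))"
    "\<pi> (1,0,0) [^]\<^bsub>Q\<^esub> ((2::nat) ^ \<gamma>) \<noteq> \<one>\<^bsub>Q\<^esub>"
proof -
  interpret N: normal "NN (2 ^ \<gamma>)" heis by (rule NN_normal)
  show Qg: "group Q" unfolding Q_def by (rule N.factorgroup_is_group)
  have carQ: "carrier Q = \<pi> ` carrier heis" unfolding Q_def \<pi>_def by (rule carrier_FactGroup)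
  show "countable (carrier Q)" unfolding carQ by simp
  show "\<pi> (1,0,0) \<in> carrier Q" "\<pi> (0,1,0) \<in> carrier Q" unfolding carQ by simp_all
  have hom: "\<pi> \<in> hom heis Q" unfolding Q_def \<pi>_def by (rule N.r_coset_hom_Mod)
  have hg: "group_hom heis Q \<pi>" using hom Qg heis_group by (simp add: group_hom_def group_hom_axioms_def)
  have pw: "\<And>a (k::nat). \<pi> a [^]\<^bsub>Q\<^esub> k = \<pi> (a [^]\<^bsub>heis\<^esub> k)"
    using hom_nat_pow[OF hom _ heis_group Qg] by simp
  have one: "\<one>\<^bsub>Q\<^esub> = \<pi> (0,0,0)" using group_hom.hom_one[OF hg] by simp
  have cm: "\<And>a b. commutator Q (\<pi> a) (\<pi> b) = \<pi> (commutator heis a b)"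
    using commutator_hom[OF hg] by simp
  have eq: "\<And>u v. \<pi> u = \<pi> v \<longleftrightarrow> u \<otimes>\<^bsub>heis\<^esub> inv\<^bsub>heis\<^esub> v \<in> NN (2 ^ \<gamma>)"
    unfolding \<pi>_def by (rule pi_eq)
  obtain g where gg: "\<gamma> = Suc g" using g1 by (cases \<gamma>) auto
  define M :: int where "M = 2 ^ g"
  have Mpos: "M > 0" by (simp add: M_def)
  have n1: "(2::int) ^ \<gamma> = 2 * M" by (simp add: gg M_def)
  have n2: "int ((2::nat) ^ (\<gamma> + 1)) = 4 * M" by (simp add: gg M_def)
  have n3: "int ((2::nat) ^ \<gamma>) = 2 * M" by (simp add: gg M_def)
  have n4: "int ((2::nat) ^ (\<gamma> - 1)) = M" by (simp add: gg M_def)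
  show "rels \<gamma> Q (\<pi> (1,0,0)) (\<pi> (0,1,0))"
    unfolding rels_def cm commXY commCX commCY pw powX powY powC one eq n1 n2 n3 n4
    by (simp add: NN_def)
  show "\<pi> (1,0,0) [^]\<^bsub>Q\<^esub> ((2::nat) ^ \<gamma>) \<noteq> \<one>\<^bsub>Q\<^esub>"
    unfolding pw powX one eq n1 n3
    using Mpos apply (simp add: NN_def)
    done
qed


lemma model_nat:
  assumes g1: "\<gamma> \<ge> 1"
  shows "\<exists>(H::nat monoid) x y. group H \<and> x \<in> carrier H \<and> y \<in> carrier H \<and> rels \<gamma> H x y
           \<and> x [^]\<^bsub>H\<^esub> ((2::nat) ^ \<gamma>) \<noteq> \<one>\<^bsub>H\<^esub>"
proof -
  define Q where "Q = heis Mod NN (2 ^ \<gamma>)"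
  define \<pi> where "\<pi> = r_coset heis (NN (2 ^ \<gamma>))"
  note M = model_Q[OF g1, folded Q_def \<pi>_def]
  obtain H :: "nat monoid" and f where H: "group H" and iso: "f \<in> iso Q H"
    using nat_copy[OF M(1) M(2)] by blast
  have hom: "f \<in> hom Q H" and bij: "bij_betw f (carrier Q) (carrier H)" using iso by (auto simp: iso_def)
  have hg: "group_hom Q H f" using hom M(1) H by (simp add: group_hom_def group_hom_axioms_def)
  have r: "rels \<gamma> H (f (\<pi> (1,0,0))) (f (\<pi> (0,1,0)))" by (rule rels_hom[OF hg M(3) M(4) M(5)])
  have xc: "f (\<pi> (1,0,0)) \<in> carrier H" using hom M(3) by (auto simp: hom_def)
  have yc: "f (\<pi> (0,1,0)) \<in> carrier H" using hom M(4) by (auto simp: hom_def)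
  have ne: "f (\<pi> (1,0,0)) [^]\<^bsub>H\<^esub> ((2::nat) ^ \<gamma>) \<noteq> \<one>\<^bsub>H\<^esub>"
  proof
    assume e: "f (\<pi> (1,0,0)) [^]\<^bsub>H\<^esub> ((2::nat) ^ \<gamma>) = \<one>\<^bsub>H\<^esub>"
    have "f (\<pi> (1,0,0) [^]\<^bsub>Q\<^esub> ((2::nat) ^ \<gamma>)) = f (\<pi> (1,0,0)) [^]\<^bsub>H\<^esub> ((2::nat) ^ \<gamma>)"
      by (rule hom_nat_pow[OF hom M(3) M(1) H])
    also have "\<dots> = f \<one>\<^bsub>Q\<^esub>" using e group_hom.hom_one[OF hg] by simp
    finally have "f (\<pi> (1,0,0) [^]\<^bsub>Q\<^esub> ((2::nat) ^ \<gamma>)) = f \<one>\<^bsub>Q\<^esub>" .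
    moreover have "\<pi> (1,0,0) [^]\<^bsub>Q\<^esub> ((2::nat) ^ \<gamma>) \<in> carrier Q"
      using M(1,3) by (simp add: group.is_monoid monoid.nat_pow_closed)
    moreover have "\<one>\<^bsub>Q\<^esub> \<in> carrier Q" using M(1) by (simp add: group.is_monoid monoid.one_closed)
    ultimately have "\<pi> (1,0,0) [^]\<^bsub>Q\<^esub> ((2::nat) ^ \<gamma>) = \<one>\<^bsub>Q\<^esub>"
      using bij unfolding bij_betw_def inj_on_def by blast
    then show False using M(6) by simp
  qed
  show ?thesis using H xc yc r ne by blast
qed

theorem theorem4p1:
  fixes \<gamma> :: nat
    and G :: "('a, 'b) monoid_scheme" and a b :: 'a
    and K :: "('k, 'c) monoid_scheme"
  assumes "\<gamma> \<ge> 1"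
    and "presented_by_rels \<gamma> G a b"
  shows "\<not> capable_via K G"
proof
  assume cap: "capable_via K G"
  have K: "group K" and "K Mod center K \<cong> G" using cap by (auto simp: capable_via_def)
  then obtain \<phi> where phi: "\<phi> \<in> iso (K Mod center K) G" by (auto simp: is_iso_def)
  have P: "presented_by_rels \<gamma> G a b" by (rule assms(2))
  have G: "group G" and a: "a \<in> carrier G" and b: "b \<in> carrier G"
    and gen: "generate G {a, b} = carrier G" and r: "rels \<gamma> G a b"
    using P unfolding presented_by_rels_def by blast+
  have univ: "\<And>(H :: nat monoid) x y. group H \<Longrightarrow> x \<in> carrier H \<Longrightarrow> y \<in> carrier H \<Longrightarrow> rels \<gamma> H x y
        \<Longrightarrow> (\<exists>h \<in> hom G H. h a = x \<and> h b = y)"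
    using P unfolding presented_by_rels_def by blast
  have ab: "a [^]\<^bsub>G\<^esub> ((2::nat) ^ \<gamma>) = b [^]\<^bsub>G\<^esub> ((2::nat) ^ \<gamma>)"
    using r unfolding rels_def by (elim conjE)
  have a1: "a [^]\<^bsub>G\<^esub> ((2::nat) ^ \<gamma>) = \<one>\<^bsub>G\<^esub>"
    by (rule epicenter_lemma[OF K G phi gen a b ab])
  obtain H :: "nat monoid" and x y where H: "group H" and xc: "x \<in> carrier H" and yc: "y \<in> carrier H"
    and rH: "rels \<gamma> H x y" and ne: "x [^]\<^bsub>H\<^esub> ((2::nat) ^ \<gamma>) \<noteq> \<one>\<^bsub>H\<^esub>"
    using model_nat[OF assms(1)] by blast
  obtain h where h: "h \<in> hom G H" "h a = x" using univ[OF H xc yc rH] by blast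
  have hg: "group_hom G H h" using h(1) G H by (simp add: group_hom_def group_hom_axioms_def)
  have "x [^]\<^bsub>H\<^esub> ((2::nat) ^ \<gamma>) = h (a [^]\<^bsub>G\<^esub> ((2::nat) ^ \<gamma>))"
    using hom_nat_pow[OF h(1) a G H] h(2) by simp
  also have "\<dots> = \<one>\<^bsub>H\<^esub>" using a1 group_hom.hom_one[OF hg] by simp
  finally show False using ne by simp
qed

end
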